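(* Let $P^G=\{p^G(o_1o_2o_3|i_1i_2i_3)\}$ be the tripartite correlation defined in the context. Then there exist a finite set $\Lambda$, a probability distribution $(p_\lambda)_{\lambda\in\Lambda}$, single-party conditional distributions $p(o_1|i_1,\lambda)$, and bipartite conditional distributions $p_{2\leftarrow3}(o_2o_3|i_2i_3,\lambda)$ satisfying, for every $\lambda$, every $i_3,o_3$ and every $i_2,i_2'$, $$\sum_{o_2}p_{2\leftarrow3}(o_2o_3|i_2i_3,\lambda)=\sum_{o_2}p_{2\leftarrow3}(o_2o_3|i_2'i_3,\lambda)$$ (i.e. no signaling from party 2 to party 3; signaling from 3 to 2 is allowed), such that $$p^G(o_1o_2o_3|i_1i_2i_3)=\sum_{\lambda\in\Lambda}p_\lambda\, p(o_1|i_1,\lambda)\,p_{2\leftarrow3}(o_2o_3|i_2i_3,\lambda)$$ for all inputs and outputs. In particular, $P^G$ admits a bilocal decomposition with respect to the partition $1|23$ in which no term displays signaling in both directions.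
   Context: Three parties; party $k\in\{1,2,3\}$ has input $i_k\in\{0,1\}$ and output $o_k\in\{0,1\}$. A tripartite correlation is a family of conditional probability distributions $p(o_1o_2o_3|i_1i_2i_3)$. Let $a^{\pm}=\frac14\left(1\pm\frac{1}{\sqrt2}\right)$. The correlation $P^G$ is given by the following matrix, whose rows are indexed by $(i_1i_2i_3)$ and columns by $(o_1o_2o_3)$, both in lexicographic order $000,001,010,011,100,101,110,111$: $$P^G=\frac12\begin{pmatrix} 2a^+&2a^-&0&0&0&0&2a^-&2a^+\\ 2a^+&2a^-&0&0&0&0&2a^-&2a^+\\ a^+&a^-&a^+&a^-&a^-&a^+&a^-&a^+\\ a^+&a^-&a^+&a^-&a^-&a^+&a^-&a^+\\ a^+&a^-&a^-&a^+&a^+&a^-&a^-&a^+\\ a^+&a^-&a^-&a^+&a^+&a^-&a^-&a^+\\ a^+&a^-&a^-&a^+&a^-&a^+&a^+&a^-\\ a^-&a^+&a^+&a^-&a^+&a^-&a^-&a^+ \end{pmatrix}.$$ (It is the quantum correlation obtained from the state $\frac{1}{\sqrt2}(|000\rangle+|111\rangle)$ when parties 1 and 2 measure $\sigma_z$ on input 0 and $\sigma_x$ on input 1, party 3 measures $(\sigma_z+\sigma_x)/\sqrt2$ on input 0 and $(\sigma_z-\sigma_x)/\sqrt2$ on input 1, and outcome $+1$ is recorded as 0, $-1$ as 1.) *)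

theory Defs
  imports Complex_Main
begin

definition a_plus :: real where "a_plus = (1 + 1 / sqrt 2) / 4"
definition a_minus :: real where "a_minus = (1 - 1 / sqrt 2) / 4"

definition bit :: "bool \<Rightarrow> nat" where "bit b = (if b then 1 else 0)"

(* the matrix of P^G (without the overall factor 1/2), rows indexed by i1i2i3,
   columns by o1o2o3, both in lexicographic order 000,...,111 *)
definition PG_table :: "real list list" where
  "PG_table =
   [[2*a_plus, 2*a_minus, 0, 0, 0, 0, 2*a_minus, 2*a_plus],
    [2*a_plus, 2*a_minus, 0, 0, 0, 0, 2*a_minus, 2*a_plus],
    [a_plus, a_minus, a_plus, a_minus, a_minus, a_plus, a_minus, a_plus],
    [a_plus, a_minus, a_plus, a_minus, a_minus, a_plus, a_minus, a_plus],
    [a_plus, a_minus, a_minus, a_plus, a_plus, a_minus, a_minus, a_plus],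
    [a_plus, a_minus, a_minus, a_plus, a_plus, a_minus, a_minus, a_plus],
    [a_plus, a_minus, a_minus, a_plus, a_minus, a_plus, a_plus, a_minus],
    [a_minus, a_plus, a_plus, a_minus, a_plus, a_minus, a_minus, a_plus]]"

definition pG :: "bool \<Rightarrow> bool \<Rightarrow> bool \<Rightarrow> bool \<Rightarrow> bool \<Rightarrow> bool \<Rightarrow> real" where
  "pG o1 o2 o3 i1 i2 i3 =
     (1/2) * (PG_table ! (4 * bit i1 + 2 * bit i2 + bit i3)) ! (4 * bit o1 + 2 * bit o2 + bit o3)"

end

theory Submission
  imports Defs
begin


definition Sb :: "nat \<Rightarrow> bool" where "Sb l = odd l"
definition Cb :: "nat \<Rightarrow> bool" where "Cb l = odd (l div 2)"
definition Mb :: "nat \<Rightarrow> bool" where "Mb l = odd (l div 4)"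
definition Nb :: "nat \<Rightarrow> bool" where "Nb l = odd (l div 8)"
definition wt :: "bool \<Rightarrow> real" where "wt b = (if b then a_minus else a_plus)"
definition PL :: "nat \<Rightarrow> real" where "PL l = wt (Mb l) * wt (Nb l)"
definition P1 :: "bool \<Rightarrow> bool \<Rightarrow> nat \<Rightarrow> real" where
  "P1 o1 i1 l = (if o1 = (if i1 then Cb l else Sb l) then 1 else 0)"
definition P23 :: "bool \<Rightarrow> bool \<Rightarrow> bool \<Rightarrow> bool \<Rightarrow> nat \<Rightarrow> real" where
  "P23 o2 o3 i2 i3 l = (if o3 = (Sb l \<noteq> Mb l) then 1 else 0) *
     (if o2 = (if i2 then ((Sb l \<noteq> Mb l) \<noteq> (Cb l \<noteq> (i3 \<noteq> Nb l))) else Sb l) then 1 else 0)"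

lemma am: "a_minus = 1/2 - a_plus" unfolding a_minus_def a_plus_def by (simp add: field_simps)
lemma ap_nn: "a_plus \<ge> 0" unfolding a_plus_def by (simp add: add_nonneg_nonneg)
lemma am_nn: "a_minus \<ge> 0"
proof -
  have "1 / sqrt 2 \<le> 1" by simp
  then show ?thesis unfolding a_minus_def by simp
qed

lemma L16: "{0..<16::nat} = {0,1,2,3,4,5,6,7,8,9,10,11,12,13,14,15}" by (simp add: atLeast0LessThan lessThan_nat_numeral pred_numeral_simps lessThan_Suc) blast

lemma sum16: "(\<Sum>l\<in>{0..<16::nat}. f l) = f 0 + f 1 + f 2 + f 3 + f 4 + f 5 + f 6 + f 7 + f 8 + f 9 + f 10 + f 11 + f 12 + f 13 + f 14 + f 15"
  unfolding L16 by (simp add: add.assoc)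

lemma decomp: "pG o1 o2 o3 i1 i2 i3 = (\<Sum>l\<in>{0..<16::nat}. PL l * P1 o1 i1 l * P23 o2 o3 i2 i3 l)"
  unfolding sum16
  by (cases o1; cases o2; cases o3; cases i1; cases i2; cases i3;
      simp add: pG_def PG_table_def bit_def PL_def P1_def P23_def wt_def Sb_def Cb_def Mb_def Nb_def am algebra_simps)

theorem proposition1:
  shows "\<exists>(\<Lambda> :: nat set) (pl :: nat \<Rightarrow> real)
            (p1 :: bool \<Rightarrow> bool \<Rightarrow> nat \<Rightarrow> real)
            (p23 :: bool \<Rightarrow> bool \<Rightarrow> bool \<Rightarrow> bool \<Rightarrow> nat \<Rightarrow> real).
    finite \<Lambda> \<and>
    (\<forall>l\<in>\<Lambda>. pl l \<ge> 0) \<and> (\<Sum>l\<in>\<Lambda>. pl l) = 1 \<and>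
    (\<forall>l\<in>\<Lambda>. \<forall>o1 i1. p1 o1 i1 l \<ge> 0) \<and>
    (\<forall>l\<in>\<Lambda>. \<forall>i1. (\<Sum>o1\<in>UNIV. p1 o1 i1 l) = 1) \<and>
    (\<forall>l\<in>\<Lambda>. \<forall>o2 o3 i2 i3. p23 o2 o3 i2 i3 l \<ge> 0) \<and>
    (\<forall>l\<in>\<Lambda>. \<forall>i2 i3. (\<Sum>o2\<in>UNIV. \<Sum>o3\<in>UNIV. p23 o2 o3 i2 i3 l) = 1) \<and>
    (\<forall>l\<in>\<Lambda>. \<forall>i3 o3 i2 i2'.
        (\<Sum>o2\<in>UNIV. p23 o2 o3 i2 i3 l) = (\<Sum>o2\<in>UNIV. p23 o2 o3 i2' i3 l)) \<and>
    (\<forall>o1 o2 o3 i1 i2 i3.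
        pG o1 o2 o3 i1 i2 i3 = (\<Sum>l\<in>\<Lambda>. pl l * p1 o1 i1 l * p23 o2 o3 i2 i3 l))"
proof -
  have sw: "a_plus + a_minus = 1/2" using am by simp
  show ?thesis
    apply (rule exI[of _ "{0..<16}"], rule exI[of _ PL], rule exI[of _ P1], rule exI[of _ P23])
    apply (intro conjI)
    subgoal by simp
    subgoal by (simp add: PL_def wt_def ap_nn am_nn)
    subgoal unfolding sum16 by (simp add: PL_def wt_def Mb_def Nb_def am algebra_simps)
    subgoal by (simp add: P1_def)
    subgoal by (simp add: P1_def UNIV_bool)
    subgoal by (simp add: P23_def)
    subgoal by (simp add: P23_def UNIV_bool)
    subgoal by (simp add: P23_def UNIV_bool)
    subgoal using decomp by blast
    done
qed

end
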